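(* Let $R$ be a ring and $a\in R$ an element which is not nilpotent. Then there exists a prime ideal $I$ of $R$ such that $a+I$ is a minimal non-nilpotent element of the factor ring $R/I$.
   Context: All rings are associative with unit; "ideal" means two-sided ideal. For an ideal $J$ of a ring $S$, an element $b\in S$ is nilpotent modulo $J$ if $b^n\in J$ for some $n\in\mathbb N$. An element $b$ of a ring $S$ is minimal non-nilpotent if $b$ is not nilpotent and $b$ is nilpotent modulo $J$ for every non-zero ideal $J$ of $S$. *)

theory Defs
  imports "HOL-Algebra.QuotRing" "HOL-Algebra.Ideal_Product"
begin

text \<open>Prime ideal of a (not necessarily commutative) ring: a proper two-sided ideal P
  such that for all two-sided ideals A, B with A B contained in P, A or B is contained in P.
  (The library notion primeideal requires a commutative ring.)\<close>
definition ring_prime_ideal :: "'a set \<Rightarrow> ('a, 'b) ring_scheme \<Rightarrow> bool" where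
  "ring_prime_ideal P R \<longleftrightarrow> ideal P R \<and> P \<noteq> carrier R \<and>
     (\<forall>A B. ideal A R \<longrightarrow> ideal B R \<longrightarrow> ideal_prod R A B \<subseteq> P \<longrightarrow> A \<subseteq> P \<or> B \<subseteq> P)"

definition nilpotent_mod :: "('a, 'b) ring_scheme \<Rightarrow> 'a set \<Rightarrow> 'a \<Rightarrow> bool" where
  "nilpotent_mod S J b \<longleftrightarrow> (\<exists>n::nat. n \<ge> 1 \<and> b [^]\<^bsub>S\<^esub> n \<in> J)"

definition nilpotent_elem :: "('a, 'b) ring_scheme \<Rightarrow> 'a \<Rightarrow> bool" where
  "nilpotent_elem S b \<longleftrightarrow> nilpotent_mod S {\<zero>\<^bsub>S\<^esub>} b"

definition minimal_non_nilpotent :: "('a, 'b) ring_scheme \<Rightarrow> 'a \<Rightarrow> bool" where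
  "minimal_non_nilpotent S b \<longleftrightarrow> \<not> nilpotent_elem S b \<and>
     (\<forall>J. ideal J S \<longrightarrow> J \<noteq> {\<zero>\<^bsub>S\<^esub>} \<longrightarrow> nilpotent_mod S J b)"

end

theory Submission
  imports Defs "HOL-Algebra.Ring_Divisibility"
begin

lemma (in ring) main_aux:
  assumes "a \<in> carrier R"
    and "\<not> nilpotent_elem R a"
  shows "\<exists>I. ring_prime_ideal I R \<and> minimal_non_nilpotent (R Quot I) (I +>\<^bsub>R\<^esub> a)"
proof -
  note aR = assms(1)
  define F where "F = {J. ideal J R \<and> (\<forall>n::nat. n \<ge> 1 \<longrightarrow> a [^] n \<notin> J)}"
  have z: "{\<zero>} \<in> F" using assms(2) zeroideal
    unfolding F_def nilpotent_elem_def nilpotent_mod_def by auto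
  have "\<exists>M\<in>F. \<forall>X\<in>F. M \<subseteq> X \<longrightarrow> X = M"
  proof (rule subset_Zorn_nonempty)
    show "F \<noteq> {}" using z by auto
  next
    fix C assume C: "C \<noteq> {}" "subset.chain F C"
    have "subset.chain {I. ideal I R} C"
      using C(2) unfolding pred_on.chain_def F_def by auto
    from chain_Union_is_ideal[OF this] C(1) have "ideal (\<Union>C) R" by simp
    moreover have "\<forall>n::nat. n \<ge> 1 \<longrightarrow> a [^] n \<notin> \<Union>C"
      using C(2) unfolding pred_on.chain_def F_def by blast
    ultimately show "\<Union>C \<in> F" unfolding F_def by simp
  qed
  then obtain I where IF: "I \<in> F" and Imax: "\<And>X. X \<in> F \<Longrightarrow> I \<subseteq> X \<Longrightarrow> X = I" by blast
  have I: "ideal I R" and Ia: "\<And>n::nat. n \<ge> 1 \<Longrightarrow> a [^] n \<notin> I" using IF unfolding F_def by auto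
  interpret I: ideal I R by fact
  have big: "\<exists>n::nat. n \<ge> 1 \<and> a [^] n \<in> X" if "ideal X R" "I \<subseteq> X" "X \<noteq> I" for X
    using Imax[of X] that unfolding F_def by auto
  have prime: "ring_prime_ideal I R"
    unfolding ring_prime_ideal_def
  proof (intro conjI allI impI)
    show "ideal I R" by fact
    show "I \<noteq> carrier R" using Ia[of 1] aR by auto
  next
    fix A B assume A: "ideal A R" and B: "ideal B R" and AB: "ideal_prod R A B \<subseteq> I"
    show "A \<subseteq> I \<or> B \<subseteq> I"
    proof (rule ccontr)
      assume "\<not> (A \<subseteq> I \<or> B \<subseteq> I)"
      then obtain x0 y0 where x0: "x0 \<in> A" "x0 \<notin> I" and y0: "y0 \<in> B" "y0 \<notin> I" by blast
      have sup: "I \<subseteq> X <+> I" if "ideal X R" for X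
      proof
        fix i assume "i \<in> I"
        have "i = \<zero> \<oplus> i" using I.Icarr[OF \<open>i \<in> I\<close>] by simp
        moreover have "\<zero> \<in> X" using additive_subgroup.zero_closed[OF ideal.axioms(1)[OF that]] .
        ultimately show "i \<in> X <+> I" using \<open>i \<in> I\<close> unfolding set_add_def' by blast
      qed
      have sub: "X \<subseteq> X <+> I" if "ideal X R" for X
      proof
        fix i assume "i \<in> X"
        have "i = i \<oplus> \<zero>" using ideal.Icarr[OF that \<open>i \<in> X\<close>] by simp
        then show "i \<in> X <+> I" using \<open>i \<in> X\<close> I.zero_closed unfolding set_add_def' by blast
      qed
      have "\<exists>n::nat. n \<ge> 1 \<and> a [^] n \<in> A <+> I"
      proof -
        have "A <+> I \<noteq> I" using sub[OF A] x0 by blast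
        thus ?thesis using big[OF add_ideals[OF A I] sup[OF A]] by blast
      qed
      then obtain m :: nat where m: "m \<ge> 1" "a [^] m \<in> A <+> I" by blast
      then obtain x i where xi: "x \<in> A" "i \<in> I" "a [^] m = x \<oplus> i" unfolding set_add_def' by blast
      have "\<exists>n::nat. n \<ge> 1 \<and> a [^] n \<in> B <+> I"
      proof -
        have "B <+> I \<noteq> I" using sub[OF B] y0 by blast
        thus ?thesis using big[OF add_ideals[OF B I] sup[OF B]] by blast
      qed
      then obtain n :: nat where n: "n \<ge> 1" "a [^] n \<in> B <+> I" by blast
      then obtain y j where yj: "y \<in> B" "j \<in> I" "a [^] n = y \<oplus> j" unfolding set_add_def' by blast
      have xc: "x \<in> carrier R" using ideal.Icarr[OF A xi(1)] .
      have yc: "y \<in> carrier R" using ideal.Icarr[OF B yj(1)] .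
      have ic: "i \<in> carrier R" "j \<in> carrier R" using I.Icarr[OF xi(2)] I.Icarr[OF yj(2)] by auto
      have an: "a [^] n \<in> carrier R" using aR by simp
      have "a [^] (m + n) = a [^] m \<otimes> a [^] n" using aR by (simp add: nat_pow_mult)
      also have "\<dots> = x \<otimes> a [^] n \<oplus> i \<otimes> a [^] n"
        unfolding xi(3) by (rule l_distr[OF xc ic(1) an])
      also have "\<dots> \<in> I"
      proof -
        have "x \<otimes> y \<in> I" using AB ideal_prod.prod[OF xi(1) yj(1)] by blast
        moreover have "x \<otimes> j \<in> I" using I.I_l_closed xc yj by blast
        ultimately have "x \<otimes> y \<oplus> x \<otimes> j \<in> I" by (rule I.a_closed)
        moreover have "x \<otimes> y \<oplus> x \<otimes> j = x \<otimes> a [^] n"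
          unfolding yj(3) using yc ic xc by (simp add: r_distr)
        moreover have "i \<otimes> a [^] n \<in> I" using I.I_r_closed xi an by blast
        ultimately show ?thesis using I.a_closed by simp
      qed
      finally show False using Ia[of "m+n"] m by simp
    qed
  qed
  have hom: "ring_hom_ring R (R Quot I) ((+>) I)" by (rule I.rcos_ring_hom_ring)
  have zeroQ: "\<zero>\<^bsub>R Quot I\<^esub> = I" unfolding FactRing_def by simp
  have powQ: "(I +> a) [^]\<^bsub>R Quot I\<^esub> n = I +> (a [^] n)" for n :: nat
    using ring_hom_ring.hom_nat_pow[OF hom aR] by simp
  have eqI: "I +> x = I \<longleftrightarrow> x \<in> I" if "x \<in> carrier R" for x
    using I.rcos_const_imp_mem[OF that] I.a_rcos_const by blast
  have mnn: "minimal_non_nilpotent (R Quot I) (I +> a)"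
    unfolding minimal_non_nilpotent_def
  proof (intro conjI allI impI)
    show "\<not> nilpotent_elem (R Quot I) (I +> a)"
      unfolding nilpotent_elem_def nilpotent_mod_def zeroQ powQ
      using eqI Ia aR by auto
  next
    fix J assume J: "ideal J (R Quot I)" "J \<noteq> {\<zero>\<^bsub>R Quot I\<^esub>}"
    define J' where "J' = {r \<in> carrier R. I +> r \<in> J}"
    have J'i: "ideal J' R" unfolding J'_def by (rule ring_hom_ring.ideal_vimage[OF hom J(1)])
    have "I \<subseteq> J'"
    proof
      fix i assume "i \<in> I"
      hence "I +> i = \<zero>\<^bsub>R Quot I\<^esub>" using zeroQ I.a_rcos_const by simp
      thus "i \<in> J'" unfolding J'_def using \<open>i \<in> I\<close> I.Icarr
        additive_subgroup.zero_closed[OF ideal.axioms(1)[OF J(1)]] by auto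
    qed
    moreover have "J' \<noteq> I"
    proof -
      have "\<zero>\<^bsub>R Quot I\<^esub> \<in> J" using additive_subgroup.zero_closed[OF ideal.axioms(1)[OF J(1)]] .
      with J(2) obtain c where c: "c \<in> J" "c \<noteq> I" using zeroQ by blast
      have "c \<in> carrier (R Quot I)" using c additive_subgroup.a_subset[OF ideal.axioms(1)[OF J(1)]] by auto
      then obtain r where r: "r \<in> carrier R" "c = I +> r"
        unfolding FactRing_def using A_RCOSETS_def'[of R I] by auto
      hence "r \<in> J'" "r \<notin> I" using c eqI unfolding J'_def by auto
      thus ?thesis by blast
    qed
    ultimately obtain n :: nat where "n \<ge> 1" "a [^] n \<in> J'" using big[OF J'i] by blast
    thus "nilpotent_mod (R Quot I) J (I +> a)"
      unfolding nilpotent_mod_def powQ J'_def by auto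
  qed
  show ?thesis using prime mnn by blast
qed

theorem mainTheorem2:
  fixes R :: "('a, 'b) ring_scheme" and a :: 'a
  assumes "ring R"
    and "a \<in> carrier R"
    and "\<not> nilpotent_elem R a"
  shows "\<exists>I. ring_prime_ideal I R \<and> minimal_non_nilpotent (R Quot I) (I +>\<^bsub>R\<^esub> a)"
  using ring.main_aux[OF assms] .

end
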